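(* Let $a<b$ be real numbers, let $t_1,\ldots,t_n$ be numbers and put $s_k:=t_1^k+\cdots+t_n^k$ for $k\ge 0$ (so $s_0=n$). (i) If $t_1,\ldots,t_n$ are real numbers lying in $[a,b]$, then for every natural number $m\ge 1$ the matrix $H_m(s_0,s_1,\ldots,s_{2m-1},[a,b])$ is positive semidefinite. (ii) Conversely, suppose $t_1,\ldots,t_n$ are complex numbers such that all power sums $s_k$ are real, and let $m\ge \operatorname{rank}(R_n)$, where $R_n=(s_{i+j-2})_{i,j=1}^n$ (this rank equals the number of distinct values among the $t_i$). If $H_m(s_0,s_1,\ldots,s_{2m-1},[a,b])$ is positive semidefinite, then all $t_i$ are real and lie in $[a,b]$.
   Context: For real numbers $s_0,s_1,\ldots,s_{2m-1}$ and reals $a<b$, define the $m\times m$ matrices $R_m=(s_{i+j-2})_{i,j=1}^m$, $F_m^+(a)=(s_{i+j-1}-a\,s_{i+j-2})_{i,j=1}^m$, $F_m^-(b)=(b\,s_{i+j-2}-s_{i+j-1})_{i,j=1}^m$, and the $3m\times 3m$ block-diagonal matrix $H_m(s_0,\ldots,s_{2m-1},[a,b])=\operatorname{diag}(R_m,F_m^+(a),F_m^-(b))$. *)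

theory Defs
  imports Complex_Main "Jordan_Normal_Form.DL_Rank"
begin

(* Matrices are 0-indexed: entry (i,j) with 0 <= i,j < m corresponds to entry (i+1,j+1) of the paper. *)

definition hankel_R :: "(nat \<Rightarrow> real) \<Rightarrow> nat \<Rightarrow> real mat" where
  "hankel_R s m = mat m m (\<lambda>(i,j). s (i + j))"

definition hankel_Fplus :: "(nat \<Rightarrow> real) \<Rightarrow> real \<Rightarrow> nat \<Rightarrow> real mat" where
  "hankel_Fplus s a m = mat m m (\<lambda>(i,j). s (i + j + 1) - a * s (i + j))"

definition hankel_Fminus :: "(nat \<Rightarrow> real) \<Rightarrow> real \<Rightarrow> nat \<Rightarrow> real mat" where
  "hankel_Fminus s b m = mat m m (\<lambda>(i,j). b * s (i + j) - s (i + j + 1))"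

(* H_m(s_0,...,s_{2m-1},[a,b]) = diag(R_m, F_m^+(a), F_m^-(b)), a 3m x 3m block-diagonal matrix *)
definition block_diag3 :: "real mat \<Rightarrow> real mat \<Rightarrow> real mat \<Rightarrow> real mat" where
  "block_diag3 A B C =
     four_block_mat A (0\<^sub>m (dim_row A) (dim_col B + dim_col C))
                      (0\<^sub>m (dim_row B + dim_row C) (dim_col A))
                      (four_block_mat B (0\<^sub>m (dim_row B) (dim_col C)) (0\<^sub>m (dim_row C) (dim_col B)) C)"

definition hankel_H :: "(nat \<Rightarrow> real) \<Rightarrow> nat \<Rightarrow> real \<Rightarrow> real \<Rightarrow> real mat" where
  "hankel_H s m a b = block_diag3 (hankel_R s m) (hankel_Fplus s a m) (hankel_Fminus s b m)"

definition psd_mat :: "real mat \<Rightarrow> bool" where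
  "psd_mat A \<longleftrightarrow> A \<in> carrier_mat (dim_row A) (dim_row A) \<and> A\<^sup>T = A \<and>
     (\<forall>x \<in> carrier_vec (dim_row A). scalar_prod x (A *\<^sub>v x) \<ge> 0)"

definition mat_rank :: "real mat \<Rightarrow> nat" where
  "mat_rank A = vec_space.rank (dim_row A) A"

end

theory Submission
  imports Defs
begin

lemma lagrange_exists:
  fixes S :: "complex set"
  assumes "finite S" "S \<noteq> {}"
  shows "\<exists>P. degree P < card S \<and> (\<forall>u\<in>S. poly P u = f u)"
proof -
  define L where "L w = Polynomial.smult (1 / (\<Prod>u\<in>S-{w}. (w - u))) (\<Prod>u\<in>S-{w}. [:-u, 1:])" for w
  have degL: "degree (L w) < card S" if "w \<in> S" for w
  proof -
    have "degree (L w) \<le> degree (\<Prod>u\<in>S-{w}. [:-u, 1:])" unfolding L_def by simp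
    also have "\<dots> \<le> sum (degree \<circ> (\<lambda>u. [:-u, 1:])) (S-{w})"
      by (rule degree_prod_sum_le) (use assms in auto)
    also have "\<dots> = card (S - {w})" by simp
    also have "\<dots> < card S" using assms that by (simp add: card_gt_0_iff)
    finally show ?thesis .
  qed
  have polyL: "poly (L w) v = (if v = w then 1 else 0)" if "w \<in> S" "v \<in> S" for w v
  proof (cases "v = w")
    case True
    have "(\<Prod>u\<in>S-{w}. (w - u)) \<noteq> 0" using assms by (simp add: prod_zero_iff)
    then show ?thesis using True unfolding L_def by (simp add: poly_prod)
  next
    case False
    have "(\<Prod>u\<in>S-{w}. poly [:-u, 1:] v) = 0"
      using assms that False by (subst prod_zero_iff) auto
    then show ?thesis using False unfolding L_def by (simp add: poly_prod)
  qed
  define P where "P = (\<Sum>w\<in>S. Polynomial.smult (f w) (L w))"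
  have "degree P < card S"
  proof -
    have "degree P \<le> card S - 1" unfolding P_def
    proof (rule degree_sum_le)
      fix w assume "w \<in> S"
      have "degree (Polynomial.smult (f w) (L w)) \<le> degree (L w)" by (rule Polynomial.degree_smult_le)
      then show "degree (Polynomial.smult (f w) (L w)) \<le> card S - 1" using degL[OF \<open>w \<in> S\<close>] by linarith
    qed (use assms in auto)
    moreover have "card S > 0" using assms by (simp add: card_gt_0_iff)
    ultimately show ?thesis by linarith
  qed
  moreover have "poly P v = f v" if "v \<in> S" for v
  proof -
    have "poly P v = (\<Sum>w\<in>S. f w * (if v = w then 1 else 0))"
      unfolding P_def poly_sum using polyL that by (intro sum.cong) auto
    also have "\<dots> = (\<Sum>w\<in>S. if v = w then f w else 0)" by (intro sum.cong) auto
    also have "\<dots> = f v" using assms that by (simp add: sum.delta)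
    finally show ?thesis .
  qed
  ultimately show ?thesis by blast
qed

lemma poly_sum_lt:
  assumes "degree p < m"
  shows "poly p (z::complex) = (\<Sum>j<m. coeff p j * z^j)"
proof -
  have "poly p z = (\<Sum>j\<le>degree p. coeff p j * z^j)" by (rule poly_altdef)
  also have "\<dots> = (\<Sum>j<m. coeff p j * z^j)"
    using assms by (intro sum.mono_neutral_left) (auto simp: coeff_eq_0)
  finally show ?thesis .
qed

lemma real_interp:
  fixes S :: "complex set"
  assumes "finite S" "S \<noteq> {}" "card S \<le> m" "\<forall>u\<in>S. cnj u \<in> S"
    "\<forall>u\<in>S. f (cnj u) = cnj (f u)"
  shows "\<exists>x\<in>carrier_vec m. \<forall>u\<in>S. (\<Sum>j<m. of_real (x$j) * u^j) = f u"
proof -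
  obtain P where P: "degree P < card S" "\<forall>u\<in>S. poly P u = f u"
    using lagrange_exists[OF assms(1,2)] by blast
  define x where "x = vec m (\<lambda>j. Re (coeff P j))"
  have dP: "degree P < m" using P assms by linarith
  have "(\<Sum>j<m. of_real (x$j) * u^j) = f u" if u: "u \<in> S" for u
  proof -
    have p: "poly P u = (\<Sum>j<m. coeff P j * u^j)" by (rule poly_sum_lt[OF dP])
    have c: "cnj (poly P (cnj u)) = (\<Sum>j<m. cnj (coeff P j) * u ^ j)"
      unfolding poly_sum_lt[OF dP] by simp
    have "(\<Sum>j<m. of_real (x$j) * u^j) = (\<Sum>j<m. ((coeff P j + cnj (coeff P j)) / 2) * u^j)"
      unfolding x_def by (intro sum.cong refl) (simp add: complex_add_cnj)
    also have "\<dots> = (\<Sum>j<m. (coeff P j * u^j + cnj (coeff P j) * u^j) / 2)"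
      by (intro sum.cong refl) (simp only: add_divide_distrib distrib_right times_divide_eq_left)
    also have "\<dots> = ((\<Sum>j<m. coeff P j * u^j) + (\<Sum>j<m. cnj (coeff P j) * u^j)) / 2"
      by (simp only: sum_divide_distrib[symmetric] sum.distrib)
    also have "\<dots> = (poly P u + cnj (poly P (cnj u))) / 2"
      by (simp only: p c)
    also have "\<dots> = f u" using P u assms by simp
    finally show ?thesis .
  qed
  moreover have "x \<in> carrier_vec m" unfolding x_def by simp
  ultimately show ?thesis by blast
qed

definition wmat :: "nat \<Rightarrow> (nat \<Rightarrow> complex) \<Rightarrow> (nat \<Rightarrow> complex) \<Rightarrow> nat \<Rightarrow> real mat" where
  "wmat n c t m = mat m m (\<lambda>(i,j). Re (\<Sum>l<n. c l * t l ^ (i+j)))"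

lemma qf_wmat:
  assumes x: "x \<in> carrier_vec m"
  shows "x \<bullet> (wmat n c t m *\<^sub>v x) = Re (\<Sum>l<n. c l * (\<Sum>j<m. of_real (x$j) * t l ^ j)^2)"
proof -
  define X where "X j = complex_of_real (x$j)" for j
  have "x \<bullet> (wmat n c t m *\<^sub>v x) = (\<Sum>i<m. \<Sum>j<m. x$i * x$j * Re (\<Sum>l<n. c l * t l ^ (i+j)))"
    using x unfolding scalar_prod_def mult_mat_vec_def wmat_def
    by (auto simp: lessThan_atLeast0 sum_distrib_left mult_ac intro!: sum.cong)
  also have "\<dots> = (\<Sum>i<m. \<Sum>j<m. Re (\<Sum>l<n. X i * X j * (c l * t l ^ (i+j))))"
    by (intro sum.cong refl) (simp add: X_def sum_distrib_left[symmetric])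
  also have "\<dots> = Re (\<Sum>i<m. \<Sum>j<m. \<Sum>l<n. X i * X j * (c l * t l ^ (i+j)))"
    by (simp only: Re_sum)
  also have "(\<Sum>i<m. \<Sum>j<m. \<Sum>l<n. X i * X j * (c l * t l ^ (i+j)))
      = (\<Sum>l<n. \<Sum>i<m. \<Sum>j<m. X i * X j * (c l * t l ^ (i+j)))"
    by (subst sum.swap, rule sum.cong[OF refl], rule sum.swap)
  also have "\<dots> = (\<Sum>l<n. c l * (\<Sum>j<m. X j * t l ^ j)^2)"
  proof (rule sum.cong[OF refl])
    fix l
    have "(\<Sum>j<m. X j * t l ^ j)^2 = (\<Sum>i<m. \<Sum>j<m. (X i * t l ^ i) * (X j * t l ^ j))"
      by (simp only: power2_eq_square sum_product)
    then have "c l * (\<Sum>j<m. X j * t l ^ j)^2 = (\<Sum>i<m. \<Sum>j<m. c l * ((X i * t l ^ i) * (X j * t l ^ j)))"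
      by (simp only: sum_distrib_left)
    also have "\<dots> = (\<Sum>i<m. \<Sum>j<m. X i * X j * (c l * t l ^ (i+j)))"
      by (intro sum.cong refl) (simp add: power_add mult_ac)
    finally show "(\<Sum>i<m. \<Sum>j<m. X i * X j * (c l * t l ^ (i+j))) = c l * (\<Sum>j<m. X j * t l ^ j)^2" by simp
  qed
  finally show ?thesis unfolding X_def .
qed


lemma wmat_carrier: "wmat n c t m \<in> carrier_mat m m"
  unfolding wmat_def by simp

lemma wmat_sym: "(wmat n c t m)\<^sup>T = wmat n c t m"
  unfolding wmat_def by (rule eq_matI) (auto simp: add.commute)

lemma hankel_R_wmat:
  "hankel_R (\<lambda>k. Re (\<Sum>l<n. t l ^ k)) m = wmat n (\<lambda>_. 1) t m"
  unfolding hankel_R_def wmat_def by (rule eq_matI) auto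

lemma hankel_Fplus_wmat:
  "hankel_Fplus (\<lambda>k. Re (\<Sum>l<n. t l ^ k)) a m = wmat n (\<lambda>l. t l - of_real a) t m"
proof -
  have e: "(\<Sum>l<n. (t l - of_real a) * t l ^ k) = (\<Sum>l<n. t l ^ (k+1)) - of_real a * (\<Sum>l<n. t l ^ k)" for k
    by (simp add: sum_subtractf sum_distrib_left left_diff_distrib)
  show ?thesis unfolding hankel_Fplus_def wmat_def
    by (rule eq_matI) (simp_all only: index_mat dim_row_mat dim_col_mat e, simp_all)
qed

lemma hankel_Fminus_wmat:
  "hankel_Fminus (\<lambda>k. Re (\<Sum>l<n. t l ^ k)) b m = wmat n (\<lambda>l. of_real b - t l) t m"
proof -
  have e: "(\<Sum>l<n. (of_real b - t l) * t l ^ k) = of_real b * (\<Sum>l<n. t l ^ k) - (\<Sum>l<n. t l ^ (k+1))" for k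
    by (simp add: sum_subtractf sum_distrib_left left_diff_distrib)
  show ?thesis unfolding hankel_Fminus_def wmat_def
    by (rule eq_matI) (simp_all only: index_mat dim_row_mat dim_col_mat e, simp_all)
qed

lemma bd3_carrier:
  assumes "A \<in> carrier_mat m m" "B \<in> carrier_mat m m" "C \<in> carrier_mat m m"
  shows "block_diag3 A B C \<in> carrier_mat (m + (m + m)) (m + (m + m))"
  using assms unfolding block_diag3_def by (auto intro!: four_block_carrier_mat)

lemma bd3_qf:
  assumes A: "A \<in> carrier_mat m m" and B: "B \<in> carrier_mat m m" and C: "C \<in> carrier_mat m m"
    and x: "x \<in> carrier_vec m" and y: "y \<in> carrier_vec m" and z: "z \<in> carrier_vec m"
  shows "(x @\<^sub>v (y @\<^sub>v z)) \<bullet> (block_diag3 A B C *\<^sub>v (x @\<^sub>v (y @\<^sub>v z)))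
     = x \<bullet> (A *\<^sub>v x) + y \<bullet> (B *\<^sub>v y) + z \<bullet> (C *\<^sub>v z)"
proof -
  have BC: "four_block_mat B (0\<^sub>m m m) (0\<^sub>m m m) C \<in> carrier_mat (m+m) (m+m)"
    using B C by (auto intro!: four_block_carrier_mat)
  have "block_diag3 A B C = four_block_mat A (0\<^sub>m m (m+m)) (0\<^sub>m (m+m) m) (four_block_mat B (0\<^sub>m m m) (0\<^sub>m m m) C)"
    unfolding block_diag3_def using A B C by auto
  then have "block_diag3 A B C *\<^sub>v (x @\<^sub>v (y @\<^sub>v z)) = (A *\<^sub>v x) @\<^sub>v ((B *\<^sub>v y) @\<^sub>v (C *\<^sub>v z))"
    using A B C x y z BC by (simp add: mult_mat_vec_split)
  then show ?thesis using A B C x y z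
    by (simp add: scalar_prod_append[of _ m _ "m+m"] scalar_prod_append[of _ m _ m])
qed

lemma bd3_sym:
  assumes A: "A \<in> carrier_mat m m" and B: "B \<in> carrier_mat m m" and C: "C \<in> carrier_mat m m"
    and "A\<^sup>T = A" "B\<^sup>T = B" "C\<^sup>T = C"
  shows "(block_diag3 A B C)\<^sup>T = block_diag3 A B C"
proof -
  have BC: "four_block_mat B (0\<^sub>m m m) (0\<^sub>m m m) C \<in> carrier_mat (m+m) (m+m)"
    using B C by (auto intro!: four_block_carrier_mat)
  have e: "block_diag3 A B C = four_block_mat A (0\<^sub>m m (m+m)) (0\<^sub>m (m+m) m) (four_block_mat B (0\<^sub>m m m) (0\<^sub>m m m) C)"
    unfolding block_diag3_def using A B C by auto
  have i: "(four_block_mat B (0\<^sub>m m m) (0\<^sub>m m m) C)\<^sup>T = four_block_mat B (0\<^sub>m m m) (0\<^sub>m m m) C"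
    by (subst transpose_four_block_mat[OF B zero_carrier_mat zero_carrier_mat C]) (use assms in simp)
  show ?thesis unfolding e
    by (subst transpose_four_block_mat[OF A zero_carrier_mat zero_carrier_mat BC]) (use assms i in simp)
qed

lemma psd_bd3I:
  assumes A: "A \<in> carrier_mat m m" and B: "B \<in> carrier_mat m m" and C: "C \<in> carrier_mat m m"
    and "A\<^sup>T = A" "B\<^sup>T = B" "C\<^sup>T = C"
    and pA: "\<And>x. x \<in> carrier_vec m \<Longrightarrow> x \<bullet> (A *\<^sub>v x) \<ge> 0"
    and pB: "\<And>x. x \<in> carrier_vec m \<Longrightarrow> x \<bullet> (B *\<^sub>v x) \<ge> 0"
    and pC: "\<And>x. x \<in> carrier_vec m \<Longrightarrow> x \<bullet> (C *\<^sub>v x) \<ge> 0"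
  shows "psd_mat (block_diag3 A B C)"
proof -
  have H: "block_diag3 A B C \<in> carrier_mat (m + (m + m)) (m + (m + m))" by (rule bd3_carrier[OF A B C])
  have "v \<bullet> (block_diag3 A B C *\<^sub>v v) \<ge> 0" if v: "v \<in> carrier_vec (m + (m + m))" for v
  proof -
    define x where "x = vec_first v m"
    define w where "w = vec_last v (m+m)"
    define y where "y = vec_first w m"
    define z where "z = vec_last w m"
    have w: "w \<in> carrier_vec (m+m)" unfolding w_def by simp
    have vv: "v = x @\<^sub>v (y @\<^sub>v z)" unfolding x_def y_def z_def
      using vec_first_last_append[OF v] vec_first_last_append[OF w] w_def by simp
    show ?thesis unfolding vv
      by (subst bd3_qf[OF A B C]) (auto simp: x_def y_def z_def intro!: add_nonneg_nonneg pA pB pC)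
  qed
  then show ?thesis unfolding psd_mat_def using H assms bd3_sym by auto
qed

lemma psd_bd3D:
  assumes A: "A \<in> carrier_mat m m" and B: "B \<in> carrier_mat m m" and C: "C \<in> carrier_mat m m"
    and p: "psd_mat (block_diag3 A B C)" and x: "x \<in> carrier_vec m"
  shows "x \<bullet> (A *\<^sub>v x) \<ge> 0" "x \<bullet> (B *\<^sub>v x) \<ge> 0" "x \<bullet> (C *\<^sub>v x) \<ge> 0"
proof -
  have H: "block_diag3 A B C \<in> carrier_mat (m + (m + m)) (m + (m + m))" by (rule bd3_carrier[OF A B C])
  have pv: "v \<bullet> (block_diag3 A B C *\<^sub>v v) \<ge> 0" if "v \<in> carrier_vec (m + (m + m))" for v
    using p H that unfolding psd_mat_def by auto
  have z: "0\<^sub>v m \<in> carrier_vec m" by simp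
  have zA: "0\<^sub>v m \<bullet> (A *\<^sub>v 0\<^sub>v m) = 0" using A by simp
  have zB: "0\<^sub>v m \<bullet> (B *\<^sub>v 0\<^sub>v m) = 0" using B by simp
  have zC: "0\<^sub>v m \<bullet> (C *\<^sub>v 0\<^sub>v m) = 0" using C by simp
  have "(x @\<^sub>v (0\<^sub>v m @\<^sub>v 0\<^sub>v m)) \<in> carrier_vec (m + (m + m))" using x z by blast
  from pv[OF this] show "x \<bullet> (A *\<^sub>v x) \<ge> 0" unfolding bd3_qf[OF A B C x z z] zB zC by simp
  have "(0\<^sub>v m @\<^sub>v (x @\<^sub>v 0\<^sub>v m)) \<in> carrier_vec (m + (m + m))" using x z by blast
  from pv[OF this] show "x \<bullet> (B *\<^sub>v x) \<ge> 0" unfolding bd3_qf[OF A B C z x z] zA zC by simp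
  have "(0\<^sub>v m @\<^sub>v (0\<^sub>v m @\<^sub>v x)) \<in> carrier_vec (m + (m + m))" using x z by blast
  from pv[OF this] show "x \<bullet> (C *\<^sub>v x) \<ge> 0" unfolding bd3_qf[OF A B C z z x] zA zB by simp
qed

lemma sum_poly:
  fixes g :: "complex poly"
  shows "(\<Sum>l\<in>A. poly g (h l)) = (\<Sum>k\<le>degree g. coeff g k * (\<Sum>l\<in>A. h l ^ k))"
proof -
  have "(\<Sum>l\<in>A. poly g (h l)) = (\<Sum>l\<in>A. \<Sum>k\<le>degree g. coeff g k * h l ^ k)"
    by (simp only: poly_altdef)
  also have "\<dots> = (\<Sum>k\<le>degree g. \<Sum>l\<in>A. coeff g k * h l ^ k)" by (rule sum.swap)
  also have "\<dots> = (\<Sum>k\<le>degree g. coeff g k * (\<Sum>l\<in>A. h l ^ k))" by (simp only: sum_distrib_left)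
  finally show ?thesis .
qed

lemma conj_sum:
  fixes t :: "nat \<Rightarrow> complex" and g :: "complex poly"
  assumes r: "\<forall>k. (\<Sum>l<n. t l ^ k) \<in> \<real>"
  shows "(\<Sum>l<n. poly g (t l)) = (\<Sum>l<n. poly g (cnj (t l)))"
proof -
  have e: "(\<Sum>l<n. cnj (t l) ^ k) = (\<Sum>l<n. t l ^ k)" for k
  proof -
    have "(\<Sum>l<n. cnj (t l) ^ k) = cnj (\<Sum>l<n. t l ^ k)" by simp
    also have "\<dots> = (\<Sum>l<n. t l ^ k)" using r Reals_cnj_iff by blast
    finally show ?thesis .
  qed
  show ?thesis unfolding sum_poly e ..
qed

lemma count_sum:
  assumes "finite A"
  shows "(\<Sum>l\<in>A. if P l then (1::complex) else 0) = of_nat (card (A \<inter> {l. P l}))"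
  using assms by (simp add: sum.If_cases)

lemma conj_closed:
  fixes t :: "nat \<Rightarrow> complex"
  assumes r: "\<forall>k. (\<Sum>l<n. t l ^ k) \<in> \<real>" and l0: "l0 < n"
  shows "\<exists>l<n. t l = cnj (t l0)"
proof (rule ccontr)
  assume no: "\<not> ?thesis"
  define S where "S = t ` {..<n} \<union> cnj ` t ` {..<n}"
  have S: "finite S" "S \<noteq> {}" unfolding S_def using l0 by auto
  obtain P where P: "\<forall>u\<in>S. poly P u = (if u = cnj (t l0) then 1 else 0)"
    using lagrange_exists[OF S, of "\<lambda>u. if u = cnj (t l0) then 1 else 0"] by blast
  have "(\<Sum>l<n. poly P (t l)) = (\<Sum>l<n. if t l = cnj (t l0) then 1 else 0)"
    using P unfolding S_def by (intro sum.cong) auto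
  also have "\<dots> = 0" using no by (intro sum.neutral) auto
  finally have L: "(\<Sum>l<n. poly P (t l)) = 0" .
  have "(\<Sum>l<n. poly P (cnj (t l))) = (\<Sum>l<n. if cnj (t l) = cnj (t l0) then 1 else 0)"
    using P unfolding S_def by (intro sum.cong) auto
  also have "\<dots> = of_nat (card ({..<n} \<inter> {l. cnj (t l) = cnj (t l0)}))" by (rule count_sum) simp
  finally have R: "(\<Sum>l<n. poly P (cnj (t l))) = of_nat (card ({..<n} \<inter> {l. cnj (t l) = cnj (t l0)}))" .
  have "card ({..<n} \<inter> {l. cnj (t l) = cnj (t l0)}) > 0"
    using l0 by (subst card_gt_0_iff) auto
  moreover have "complex_of_nat (card ({..<n} \<inter> {l. cnj (t l) = cnj (t l0)})) = 0"
    using conj_sum[OF r, of P] L R by metis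
  ultimately show False by (simp only: of_nat_eq_0_iff)
qed

lemma core_indep:
  fixes t :: "nat \<Rightarrow> complex" and x :: "nat \<Rightarrow> real"
  assumes rl: "\<forall>k. (\<Sum>l<n. t l ^ k) \<in> \<real>"
    and h: "\<forall>i<n. (\<Sum>j<card (t ` {..<n}). Re (\<Sum>l<n. t l ^ (i+j)) * x j) = 0"
    and j: "j < card (t ` {..<n})"
  shows "x j = 0"
proof -
  define T where "T = t ` {..<n}"
  define r where "r = card T"
  have fin: "finite T" unfolding T_def by simp
  have rn: "r \<le> n" unfolding r_def T_def using card_image_le[of "{..<n}" t] by simp
  have Tne: "T \<noteq> {}" using j unfolding T_def by auto
  define p where "p = (\<Sum>j<r. monom (complex_of_real (x j)) j)"
  have polyp: "poly p z = (\<Sum>j<r. of_real (x j) * z^j)" for z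
    by (simp add: p_def poly_sum poly_monom)
  have r0: "r > 0" using j unfolding r_def T_def by simp
  have degp: "degree p < r"
  proof -
    have "degree p \<le> r - 1" unfolding p_def
    proof (rule degree_sum_le)
      fix i assume "i \<in> {..<r}"
      then show "degree (monom (complex_of_real (x i)) i) \<le> r - 1"
        using degree_monom_le[of "complex_of_real (x i)" i] by auto
    qed simp
    then show ?thesis using r0 by linarith
  qed
  have hc: "(\<Sum>l<n. t l ^ i * poly p (t l)) = 0" if i: "i < n" for i
  proof -
    have "(\<Sum>l<n. t l ^ i * poly p (t l)) = (\<Sum>l<n. \<Sum>j<r. of_real (x j) * t l ^ (i+j))"
      unfolding polyp by (simp add: sum_distrib_left power_add mult_ac)
    also have "\<dots> = (\<Sum>j<r. \<Sum>l<n. of_real (x j) * t l ^ (i+j))" by (rule sum.swap)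
    also have "\<dots> = (\<Sum>j<r. of_real (x j) * of_real (Re (\<Sum>l<n. t l ^ (i+j))))"
      by (simp only: sum_distrib_left of_real_Re[OF rl[rule_format]])
    also have "\<dots> = of_real (\<Sum>j<r. Re (\<Sum>l<n. t l ^ (i+j)) * x j)"
      by (simp add: mult.commute)
    also have "\<dots> = 0" using h i unfolding r_def T_def by simp
    finally show ?thesis .
  qed
  have hg: "(\<Sum>l<n. poly g (t l) * poly p (t l)) = 0" if dg: "degree g < n" for g
  proof -
    have "(\<Sum>l<n. poly g (t l) * poly p (t l)) = (\<Sum>l<n. \<Sum>k\<le>degree g. coeff g k * (t l ^ k * poly p (t l)))"
      by (simp add: poly_altdef sum_distrib_right mult_ac)
    also have "\<dots> = (\<Sum>k\<le>degree g. \<Sum>l<n. coeff g k * (t l ^ k * poly p (t l)))" by (rule sum.swap)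
    also have "\<dots> = (\<Sum>k\<le>degree g. coeff g k * (\<Sum>l<n. t l ^ k * poly p (t l)))"
      by (simp only: sum_distrib_left)
    also have "\<dots> = 0" using hc dg by (intro sum.neutral) auto
    finally show ?thesis .
  qed
  have root: "poly p w = 0" if w: "w \<in> T" for w
  proof -
    obtain g where g: "degree g < card T" "\<forall>u\<in>T. poly g u = (if u = w then 1 else 0)"
      using lagrange_exists[OF fin Tne, of "\<lambda>u. if u = w then 1 else 0"] by blast
    have "(\<Sum>l<n. poly g (t l) * poly p (t l)) = (\<Sum>l<n. (if t l = w then 1 else 0) * poly p w)"
      using g unfolding T_def by (intro sum.cong) auto
    also have "\<dots> = (\<Sum>l<n. if t l = w then 1 else 0) * poly p w" by (simp only: sum_distrib_right)
    also have "\<dots> = of_nat (card ({..<n} \<inter> {l. t l = w})) * poly p w" by (subst count_sum) auto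
    finally have e: "of_nat (card ({..<n} \<inter> {l. t l = w})) * poly p w = 0"
      using hg[of g] g rn unfolding r_def by simp
    have "card ({..<n} \<inter> {l. t l = w}) > 0" using w unfolding T_def by (subst card_gt_0_iff) auto
    then have c: "card ({..<n} \<inter> {l. t l = w}) \<noteq> 0" by linarith
    show ?thesis using e c by simp
  qed
  have "p = 0"
  proof (rule poly_eqI_degree[of T p 0])
    fix z assume "z \<in> T" then show "poly p z = poly 0 z" using root by simp
  next
    show "degree p < card T" using degp unfolding r_def .
  next
    show "degree (0::complex poly) < card T" using r0 unfolding r_def by simp
  qed
  then have "coeff p j = 0" by simp
  moreover have "coeff p j = of_real (x j)" using j unfolding p_def r_def T_def
    by (simp add: coeff_sum coeff_monom)
  ultimately show ?thesis by simp
qed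

lemma rank_lb:
  fixes t :: "nat \<Rightarrow> complex"
  assumes rl: "\<forall>k. (\<Sum>l<n. t l ^ k) \<in> \<real>"
  shows "card (t ` {..<n}) \<le> mat_rank (hankel_R (\<lambda>k. Re (\<Sum>l<n. t l ^ k)) n)"
proof -
  define R where "R = hankel_R (\<lambda>k. Re (\<Sum>l<n. t l ^ k)) n"
  define r where "r = card (t ` {..<n})"
  have rn: "r \<le> n" unfolding r_def using card_image_le[of "{..<n}" t] by simp
  have R: "R \<in> carrier_mat n n" by (simp add: R_def hankel_R_def)
  have Rij: "R $$ (i,j) = Re (\<Sum>l<n. t l ^ (i+j))" if "i<n" "j<n" for i j
    using that by (simp add: R_def hankel_R_def)
  interpret V: vec_space "TYPE(real)" n .
  have core': "x j = 0" if hx: "\<forall>i<n. (\<Sum>j<r. R $$ (i,j) * x j) = 0" and j: "j < r" for x j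
  proof (rule core_indep[OF rl _ j[unfolded r_def]])
    show "\<forall>i<n. (\<Sum>j<card (t ` {..<n}). Re (\<Sum>l<n. t l ^ (i+j)) * x j) = 0"
    proof (intro allI impI)
      fix i assume i: "i < n"
      have "(\<Sum>j<card (t ` {..<n}). Re (\<Sum>l<n. t l ^ (i+j)) * x j) = (\<Sum>j<r. R $$ (i,j) * x j)"
        unfolding r_def using i rn Rij unfolding r_def by (intro sum.cong) auto
      then show "(\<Sum>j<card (t ` {..<n}). Re (\<Sum>l<n. t l ^ (i+j)) * x j) = 0" using hx i by simp
    qed
  qed
  define U where "U = (\<lambda>j. col R j) ` {..<r}"
  have inj: "inj_on (\<lambda>j. col R j) {..<r}"
  proof (rule inj_onI)
    fix j j' assume j: "j \<in> {..<r}" and j': "j' \<in> {..<r}" and eq: "col R j = col R j'"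
    show "j = j'"
    proof (rule ccontr)
      assume ne: "j \<noteq> j'"
      define x where "x k = (if k = j then 1 else 0) - (if k = j' then 1 else (0::real))" for k
      have "\<forall>i<n. (\<Sum>k<r. R $$ (i,k) * x k) = 0"
      proof (intro allI impI)
        fix i assume i: "i < n"
        have "(\<Sum>k<r. R $$ (i,k) * x k) = (\<Sum>k<r. R $$ (i,k) * (if k = j then 1 else 0)) - (\<Sum>k<r. R $$ (i,k) * (if k = j' then 1 else 0))"
          unfolding x_def by (simp only: right_diff_distrib sum_subtractf)
        also have "\<dots> = (\<Sum>k<r. if k = j then R $$ (i,k) else 0) - (\<Sum>k<r. if k = j' then R $$ (i,k) else 0)"
          by (intro arg_cong2[where f="(-)"] sum.cong refl) auto
        also have "\<dots> = R $$ (i,j) - R $$ (i,j')" using j j' by simp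
        also have "\<dots> = col R j $ i - col R j' $ i" using i j j' rn R by simp
        also have "\<dots> = 0" using eq by simp
        finally show "(\<Sum>k<r. R $$ (i,k) * x k) = 0" .
      qed
      then have "x j = 0" using core'[of x j] j by auto
      then show False using ne unfolding x_def by simp
    qed
  qed
  have Usub: "U \<subseteq> set (cols R)" unfolding U_def cols_def using R rn by auto
  have Ucar: "U \<subseteq> carrier_vec n" unfolding U_def using R rn by (auto simp: col_dim)
  have finU: "finite U" unfolding U_def by simp
  have indpt: "V.lin_indpt U"
    apply (rule V.finite_lin_indpt2[OF finU])
    subgoal using Ucar by simp
    subgoal premises prems for a
    proof -
      have lc: "V.lincomb a U = 0\<^sub>v n" using prems(2) by simp
      have "\<forall>i<n. (\<Sum>j<r. R $$ (i,j) * a (col R j)) = 0"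
      proof (intro allI impI)
        fix i assume i: "i < n"
        have "V.lincomb a U $ i = (\<Sum>v\<in>U. a v * v $ i)" by (rule V.lincomb_index[OF i Ucar])
        also have "\<dots> = (\<Sum>j<r. a (col R j) * col R j $ i)" unfolding U_def
          by (subst sum.reindex[OF inj]) simp
        also have "\<dots> = (\<Sum>j<r. R $$ (i,j) * a (col R j))" using i rn R by (intro sum.cong) auto
        finally have eq: "V.lincomb a U $ i = (\<Sum>j<r. R $$ (i,j) * a (col R j))" .
        have "V.lincomb a U $ i = 0" unfolding lc using i by simp
        then show "(\<Sum>j<r. R $$ (i,j) * a (col R j)) = 0" using eq by simp
      qed
      then have "\<forall>j<r. a (col R j) = 0" using core'[of "\<lambda>j. a (col R j)"] by auto
      then show ?thesis unfolding U_def by (auto simp: class_ring_simps)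
    qed
    done
  have "V.rank R \<ge> card U" by (rule V.rank_ge_card_indpt[OF R Usub indpt])
  moreover have "card U = r" unfolding U_def using inj by (simp add: card_image)
  moreover have "mat_rank R = V.rank R" unfolding mat_rank_def using R by simp
  ultimately show ?thesis unfolding R_def r_def by simp
qed

lemma cnj_eq_swap: "cnj u = w \<longleftrightarrow> u = cnj w"
  by (metis complex_cnj_cnj)

theorem theorem3p2:
  fixes a b :: real and n :: nat
  assumes "a < b"
  shows
    "(\<forall>t :: nat \<Rightarrow> real. (\<forall>i<n. t i \<in> {a..b}) \<longrightarrow>
        (\<forall>m::nat. m \<ge> 1 \<longrightarrow> psd_mat (hankel_H (\<lambda>k. \<Sum>i<n. t i ^ k) m a b)))
     \<and>
     (\<forall>(t :: nat \<Rightarrow> complex) (m::nat).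
        (\<forall>k. (\<Sum>i<n. t i ^ k) \<in> \<real>) \<longrightarrow>
        m \<ge> mat_rank (hankel_R (\<lambda>k. Re (\<Sum>i<n. t i ^ k)) n) \<longrightarrow>
        psd_mat (hankel_H (\<lambda>k. Re (\<Sum>i<n. t i ^ k)) m a b) \<longrightarrow>
        (\<forall>i<n. t i \<in> \<real> \<and> Re (t i) \<in> {a..b}))"
proof -
  have P1: "\<forall>t :: nat \<Rightarrow> real. (\<forall>i<n. t i \<in> {a..b}) \<longrightarrow>
        (\<forall>m::nat. m \<ge> 1 \<longrightarrow> psd_mat (hankel_H (\<lambda>k. \<Sum>i<n. t i ^ k) m a b))"
  proof (intro allI impI)
    fix t :: "nat \<Rightarrow> real" and m :: nat
    assume tin: "\<forall>i<n. t i \<in> {a..b}" and "1 \<le> m"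
    define tc where "tc l = complex_of_real (t l)" for l
    have se: "(\<lambda>k. \<Sum>i<n. t i ^ k) = (\<lambda>k. Re (\<Sum>l<n. tc l ^ k))"
    proof
      fix k
      have "(\<Sum>l<n. tc l ^ k) = of_real (\<Sum>i<n. t i ^ k)" by (simp add: tc_def)
      then show "(\<Sum>i<n. t i ^ k) = Re (\<Sum>l<n. tc l ^ k)" by simp
    qed
    have H: "hankel_H (\<lambda>k. \<Sum>i<n. t i ^ k) m a b = block_diag3 (wmat n (\<lambda>_. 1) tc m)
       (wmat n (\<lambda>l. tc l - of_real a) tc m) (wmat n (\<lambda>l. of_real b - tc l) tc m)"
      unfolding se hankel_H_def hankel_R_wmat hankel_Fplus_wmat hankel_Fminus_wmat ..
    have rf: "x \<bullet> (wmat n (\<lambda>l. complex_of_real (d l)) tc m *\<^sub>v x) = (\<Sum>l<n. d l * (\<Sum>j<m. x$j * t l ^ j)^2)"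
      if x: "x \<in> carrier_vec m" for x d
    proof -
      have e: "(\<Sum>j<m. complex_of_real (x$j) * tc l ^ j) = of_real (\<Sum>j<m. x$j * t l ^ j)" for l
        by (simp add: tc_def)
      have e2: "complex_of_real (d l) * (complex_of_real y)^2 = complex_of_real (d l * y^2)" for l y
        by simp
      show ?thesis unfolding qf_wmat[OF x] e e2 by (simp only: Re_sum Re_complex_of_real)
    qed
    have wa: "(\<lambda>l. tc l - of_real a) = (\<lambda>l. complex_of_real (t l - a))" by (simp add: tc_def)
    have wb: "(\<lambda>l. of_real b - tc l) = (\<lambda>l. complex_of_real (b - t l))" by (simp add: tc_def)
    have w1: "(\<lambda>_. 1::complex) = (\<lambda>l. complex_of_real ((\<lambda>_. 1) l))" by simp
    show "psd_mat (hankel_H (\<lambda>k. \<Sum>i<n. t i ^ k) m a b)" unfolding H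
    proof (rule psd_bd3I[OF wmat_carrier wmat_carrier wmat_carrier wmat_sym wmat_sym wmat_sym])
      fix x :: "real vec" assume x: "x \<in> carrier_vec m"
      show "0 \<le> x \<bullet> (wmat n (\<lambda>_. 1) tc m *\<^sub>v x)"
        unfolding w1 rf[OF x] by (intro sum_nonneg) simp
      show "0 \<le> x \<bullet> (wmat n (\<lambda>l. tc l - of_real a) tc m *\<^sub>v x)"
        unfolding wa rf[OF x] using tin by (intro sum_nonneg mult_nonneg_nonneg) auto
      show "0 \<le> x \<bullet> (wmat n (\<lambda>l. of_real b - tc l) tc m *\<^sub>v x)"
        unfolding wb rf[OF x] using tin by (intro sum_nonneg mult_nonneg_nonneg) auto
    qed
  qed
  have P2: "\<forall>(t :: nat \<Rightarrow> complex) (m::nat).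
        (\<forall>k. (\<Sum>i<n. t i ^ k) \<in> \<real>) \<longrightarrow>
        m \<ge> mat_rank (hankel_R (\<lambda>k. Re (\<Sum>i<n. t i ^ k)) n) \<longrightarrow>
        psd_mat (hankel_H (\<lambda>k. Re (\<Sum>i<n. t i ^ k)) m a b) \<longrightarrow>
        (\<forall>i<n. t i \<in> \<real> \<and> Re (t i) \<in> {a..b})"
  proof (rule allI, rule allI, rule impI, rule impI, rule impI)
    fix t :: "nat \<Rightarrow> complex" and m :: nat
    assume rl: "\<forall>k. (\<Sum>i<n. t i ^ k) \<in> \<real>"
      and rk: "m \<ge> mat_rank (hankel_R (\<lambda>k. Re (\<Sum>i<n. t i ^ k)) n)"
      and ps: "psd_mat (hankel_H (\<lambda>k. Re (\<Sum>i<n. t i ^ k)) m a b)"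
    define T where "T = t ` {..<n}"
    have fin: "finite T" unfolding T_def by simp
    have cardT: "card T \<le> m" using rank_lb[OF rl] rk unfolding T_def by linarith
    have clos: "\<forall>u\<in>T. cnj u \<in> T"
    proof
      fix u assume "u \<in> T"
      then obtain l0 where l0: "l0 < n" "u = t l0" unfolding T_def by blast
      obtain l where l: "l < n" "t l = cnj (t l0)" using conj_closed[OF rl l0(1)] by blast
      show "cnj u \<in> T" unfolding T_def using l l0 by (metis image_eqI lessThan_iff)
    qed
    have H: "hankel_H (\<lambda>k. Re (\<Sum>i<n. t i ^ k)) m a b = block_diag3 (wmat n (\<lambda>_. 1) t m)
       (wmat n (\<lambda>l. t l - of_real a) t m) (wmat n (\<lambda>l. of_real b - t l) t m)"
      unfolding hankel_H_def hankel_R_wmat hankel_Fplus_wmat hankel_Fminus_wmat ..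
    note D = psd_bd3D[OF wmat_carrier wmat_carrier wmat_carrier ps[unfolded H]]
    have interp: "\<exists>x\<in>carrier_vec m. \<forall>l<n. (\<Sum>j<m. of_real (x$j) * t l ^ j) = f (t l)"
      if fs: "\<forall>u\<in>T. f (cnj u) = cnj (f u)" and ne: "T \<noteq> {}" for f
    proof -
      obtain x where x: "x \<in> carrier_vec m" and hx: "\<forall>u\<in>T. (\<Sum>j<m. of_real (x$j) * u^j) = f u"
        using real_interp[OF fin ne cardT clos fs] by blast
      show ?thesis using x hx unfolding T_def by auto
    qed
    have real: "t l0 \<in> \<real>" if l0: "l0 < n" for l0
    proof (rule ccontr)
      assume nr: "t l0 \<notin> \<real>"
      define w where "w = t l0"
      have ww: "cnj w \<noteq> w" using nr Reals_cnj_iff unfolding w_def by metis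
      define f where "f u = (if u = w then \<i> else if u = cnj w then - \<i> else 0)" for u
      have fs: "\<forall>u\<in>T. f (cnj u) = cnj (f u)"
        unfolding f_def using ww by (auto simp: cnj_eq_swap)
      have ne: "T \<noteq> {}" using l0 unfolding T_def by auto
      obtain x where x: "x \<in> carrier_vec m" and hx: "\<forall>l<n. (\<Sum>j<m. of_real (x$j) * t l ^ j) = f (t l)"
        using interp[OF fs ne] by blast
      have "0 \<le> x \<bullet> (wmat n (\<lambda>_. 1) t m *\<^sub>v x)" by (rule D(1)[OF x])
      also have "\<dots> = Re (\<Sum>l<n. 1 * (\<Sum>j<m. of_real (x$j) * t l ^ j)^2)" by (rule qf_wmat[OF x])
      also have "\<dots> = Re (\<Sum>l<n. (f (t l))^2)" using hx by (intro arg_cong[where f=Re] sum.cong refl) (metis lessThan_iff mult_1)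
      also have "\<dots> = (\<Sum>l<n. Re ((f (t l))^2))" by (rule Re_sum)
      also have "\<dots> < (\<Sum>l<n. 0)"
      proof (rule sum_strict_mono_ex1)
        show "\<forall>l\<in>{..<n}. Re ((f (t l))^2) \<le> 0" unfolding f_def by auto
        show "\<exists>l\<in>{..<n}. Re ((f (t l))^2) < 0" using l0 unfolding f_def w_def by auto
      qed simp
      finally show False by simp
    qed
    have lo: "a \<le> Re (t l0)" if l0: "l0 < n" for l0
    proof (rule ccontr)
      assume nlo: "\<not> a \<le> Re (t l0)"
      define w where "w = t l0"
      define f where "f u = (if u = w then 1 else (0::complex))" for u
      have fs: "\<forall>u\<in>T. f (cnj u) = cnj (f u)"
      proof
        fix u assume "u \<in> T"
        then obtain l1 where l1: "l1 < n" "u = t l1" unfolding T_def by blast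
        have "t l1 \<in> \<real>" by (rule real[OF l1(1)])
        then have "cnj u = u" unfolding l1(2) using Reals_cnj_iff by blast
        then show "f (cnj u) = cnj (f u)" unfolding f_def by simp
      qed
      have ne: "T \<noteq> {}" using l0 unfolding T_def by auto
      obtain x where x: "x \<in> carrier_vec m" and hx: "\<forall>l<n. (\<Sum>j<m. of_real (x$j) * t l ^ j) = f (t l)"
        using interp[OF fs ne] by blast
      have "0 \<le> x \<bullet> (wmat n (\<lambda>l. t l - of_real a) t m *\<^sub>v x)" by (rule D(2)[OF x])
      also have "\<dots> = Re (\<Sum>l<n. (t l - of_real a) * (\<Sum>j<m. of_real (x$j) * t l ^ j)^2)" by (rule qf_wmat[OF x])
      also have "\<dots> = Re (\<Sum>l<n. (t l - of_real a) * (f (t l))^2)" using hx by (intro arg_cong[where f=Re] sum.cong refl) (metis lessThan_iff)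
      also have "\<dots> = (\<Sum>l<n. Re ((t l - of_real a) * (f (t l))^2))" by (rule Re_sum)
      also have "\<dots> < (\<Sum>l<n. 0)"
      proof (rule sum_strict_mono_ex1)
        show "\<forall>l\<in>{..<n}. Re ((t l - of_real a) * (f (t l))^2) \<le> 0"
          unfolding f_def w_def using nlo by auto
        show "\<exists>l\<in>{..<n}. Re ((t l - of_real a) * (f (t l))^2) < 0"
          using l0 nlo unfolding f_def w_def by auto
      qed simp
      finally show False by simp
    qed
    have hi: "Re (t l0) \<le> b" if l0: "l0 < n" for l0
    proof (rule ccontr)
      assume nhi: "\<not> Re (t l0) \<le> b"
      define w where "w = t l0"
      define f where "f u = (if u = w then 1 else (0::complex))" for u
      have fs: "\<forall>u\<in>T. f (cnj u) = cnj (f u)"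
      proof
        fix u assume "u \<in> T"
        then obtain l1 where l1: "l1 < n" "u = t l1" unfolding T_def by blast
        have "t l1 \<in> \<real>" by (rule real[OF l1(1)])
        then have "cnj u = u" unfolding l1(2) using Reals_cnj_iff by blast
        then show "f (cnj u) = cnj (f u)" unfolding f_def by simp
      qed
      have ne: "T \<noteq> {}" using l0 unfolding T_def by auto
      obtain x where x: "x \<in> carrier_vec m" and hx: "\<forall>l<n. (\<Sum>j<m. of_real (x$j) * t l ^ j) = f (t l)"
        using interp[OF fs ne] by blast
      have "0 \<le> x \<bullet> (wmat n (\<lambda>l. of_real b - t l) t m *\<^sub>v x)" by (rule D(3)[OF x])
      also have "\<dots> = Re (\<Sum>l<n. (of_real b - t l) * (\<Sum>j<m. of_real (x$j) * t l ^ j)^2)" by (rule qf_wmat[OF x])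
      also have "\<dots> = Re (\<Sum>l<n. (of_real b - t l) * (f (t l))^2)" using hx by (intro arg_cong[where f=Re] sum.cong refl) (metis lessThan_iff)
      also have "\<dots> = (\<Sum>l<n. Re ((of_real b - t l) * (f (t l))^2))" by (rule Re_sum)
      also have "\<dots> < (\<Sum>l<n. 0)"
      proof (rule sum_strict_mono_ex1)
        show "\<forall>l\<in>{..<n}. Re ((of_real b - t l) * (f (t l))^2) \<le> 0"
          unfolding f_def w_def using nhi by auto
        show "\<exists>l\<in>{..<n}. Re ((of_real b - t l) * (f (t l))^2) < 0"
          using l0 nhi unfolding f_def w_def by auto
      qed simp
      finally show False by simp
    qed
    show "\<forall>i<n. t i \<in> \<real> \<and> Re (t i) \<in> {a..b}" using real lo hi by auto
  qed
  show ?thesis by (rule conjI[OF P1 P2])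
qed

end
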